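(* Let $M\in\{2,3,\dots\}$, let $\mathcal{G}$ be the chain (vertex set $\mathbb{Z}$, $x\sim y$ iff $|x-y|=1$), and let $N=kM$ with $k\in\{2,3,\dots\}$. For $j\in\{1,\dots,M\}$ define $\mathfrak{m}_j:\mathbb{Z}\to\{0,\dots,M\}$ by $\mathfrak{m}_j(0)=j$, $\mathfrak{m}_j(x)=M$ for $x\in\{1,\dots,k-1\}$, $\mathfrak{m}_j(k)=M-j$, and $\mathfrak{m}_j(x)=0$ otherwise. Then the minimizers of $V_N$ over $\mathfrak{M}_N$ are, up to translations in $\mathbb{Z}$, exactly the configurations $\mathfrak{m}_1,\dots,\mathfrak{m}_M$, and $V_N(\mathfrak{m}_j)=M^2$ for every $j\in\{1,\dots,M\}$.
   Context: $\mathfrak{M}_N$ is the set of finitely supported functions $\mathfrak{m}:\mathbb{Z}\to\{0,1,\dots,M\}$ with $\sum_x\mathfrak{m}(x)=N$. The potential is $V_N(\mathfrak{m})=\sum_{x\in\mathbb{Z}}\big(\frac{M}{2}(\mathfrak{m}(x)+\mathfrak{m}(x+1))-\mathfrak{m}(x)\mathfrak{m}(x+1)\big)$. A translation of $\mathfrak{m}$ is $x\mapsto\mathfrak{m}(x-t)$ for some $t\in\mathbb{Z}$. *)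

theory Defs
  imports "HOL-Analysis.Analysis"
begin

definition configs :: "nat \<Rightarrow> nat \<Rightarrow> (int \<Rightarrow> nat) set" where
  "configs M N = {m. finite {x. m x \<noteq> 0} \<and> (\<forall>x. m x \<le> M) \<and> (\<Sum>x\<in>{x. m x \<noteq> 0}. m x) = N}"

text \<open>Potential V_N; the summand vanishes unless m x or m (x+1) is nonzero,
  so the infinite sum over Z is the finite sum over that set.\<close>
definition potential :: "nat \<Rightarrow> (int \<Rightarrow> nat) \<Rightarrow> real" where
  "potential M m = (\<Sum>x\<in>{x. m x \<noteq> 0 \<or> m (x+1) \<noteq> 0}.
      (real M / 2) * (real (m x) + real (m (x+1))) - real (m x) * real (m (x+1)))"

definition minimizers :: "nat \<Rightarrow> nat \<Rightarrow> (int \<Rightarrow> nat) set" where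
  "minimizers M N = {m \<in> configs M N. \<forall>m'\<in>configs M N. potential M m \<le> potential M m'}"

definition translate :: "int \<Rightarrow> (int \<Rightarrow> nat) \<Rightarrow> (int \<Rightarrow> nat)" where
  "translate t m = (\<lambda>x. m (x - t))"

definition mconf :: "nat \<Rightarrow> nat \<Rightarrow> nat \<Rightarrow> int \<Rightarrow> nat" where
  "mconf M k j x = (if x = 0 then j else if 1 \<le> x \<and> x \<le> int k - 1 then M
                    else if x = int k then M - j else 0)"

end

theory Submission
  imports Defs
begin

definition FF :: "nat \<Rightarrow> real \<Rightarrow> real \<Rightarrow> real" where
  "FF M p q = (real M / 2) * (p + q) - p * q"

lemma tel:
  fixes g :: "int \<Rightarrow> real"
  assumes "a \<le> c"
  shows "(\<Sum>x\<in>{a..<c}. g (x+1) - g x) = g c - g a"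
  using assms
proof (induction c rule: int_ge_induct)
  case base
  then show ?case by simp
next
  case (step i)
  have "{a..<i+1} = insert i {a..<i}" using step.hyps by auto
  then show ?case using step by simp
qed

lemma pot_interval:
  assumes "\<And>x. m x \<noteq> 0 \<Longrightarrow> a < x \<and> x \<le> b"
  shows "potential M m = (\<Sum>x\<in>{a..b}. FF M (real (m x)) (real (m (x+1))))"
  unfolding potential_def FF_def
proof (rule sum.mono_neutral_left)
  show "finite {a..b}" by simp
  show "{x. m x \<noteq> 0 \<or> m (x + 1) \<noteq> 0} \<subseteq> {a..b}"
    using assms by fastforce
  show "\<forall>i\<in>{a..b} - {x. m x \<noteq> 0 \<or> m (x + 1) \<noteq> 0}.
       real M / 2 * (real (m i) + real (m (i + 1))) - real (m i) * real (m (i + 1)) = 0"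
    by auto
qed

lemma mass_interval:
  assumes "\<And>x. m x \<noteq> 0 \<Longrightarrow> x \<in> I" "finite I"
  shows "(\<Sum>x\<in>{x. m x \<noteq> 0}. m x) = (\<Sum>x\<in>I. m x)"
  by (rule sum.mono_neutral_left) (use assms in auto)

lemma translate_configs:
  assumes "m \<in> configs M N"
  shows "translate t m \<in> configs M N"
proof -
  have eq: "{x. translate t m x \<noteq> 0} = (\<lambda>x. x + t) ` {x. m x \<noteq> 0}"
    unfolding translate_def by (auto simp: image_iff) (metis diff_add_cancel)
  have "(\<Sum>x\<in>{x. translate t m x \<noteq> 0}. translate t m x) = (\<Sum>x\<in>{x. m x \<noteq> 0}. m x)"
    unfolding eq by (subst sum.reindex) (auto simp: translate_def)
  moreover have "finite {x. translate t m x \<noteq> 0}"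
    unfolding eq using assms unfolding configs_def by auto
  moreover have "\<forall>x. translate t m x \<le> M" using assms unfolding configs_def translate_def by simp
  ultimately show ?thesis using assms unfolding configs_def mem_Collect_eq by blast
qed

lemma potential_translate:
  "potential M (translate t m) = potential M m"
  unfolding potential_def translate_def
  by (rule sum.reindex_bij_witness[of _ "\<lambda>x. x + t" "\<lambda>x. x - t"]) (auto simp: algebra_simps)

lemma mconf_configs:
  assumes "j \<le> M" "k \<ge> 2"
  shows "mconf M k j \<in> configs M (k * M)"
proof -
  have supp: "\<And>x. mconf M k j x \<noteq> 0 \<Longrightarrow> x \<in> {0..int k}"
    by (auto simp: mconf_def split: if_splits)
  have "(\<Sum>x\<in>{x. mconf M k j x \<noteq> 0}. mconf M k j x) = (\<Sum>x\<in>{0..int k}. mconf M k j x)"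
    by (rule mass_interval[of "mconf M k j" "{0..int k}"]) (use supp in auto)
  also have "{0..int k} = insert 0 (insert (int k) {1..int k - 1})" using assms by auto
  also have "(\<Sum>x\<in>insert 0 (insert (int k) {1..int k - 1}). mconf M k j x)
     = mconf M k j 0 + (mconf M k j (int k) + (\<Sum>x\<in>{1..int k - 1}. mconf M k j x))"
    using assms by (simp add: sum.insert)
  also have "(\<Sum>x\<in>{1..int k - 1}. mconf M k j x) = (\<Sum>x\<in>{1..int k - 1}. M)"
    by (rule sum.cong) (auto simp: mconf_def)
  also have "int k - 1 = int (k - 1)" using assms by simp
  also have "(\<Sum>x\<in>{1..int (k - 1)}. M) = (k - 1) * M" by simp
  also have "mconf M k j 0 = j" by (simp add: mconf_def)
  also have "mconf M k j (int k) = M - j" using assms by (simp add: mconf_def)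
  also have "j + (M - j + (k - 1) * M) = k * M" using assms
    by (cases k) auto
  finally have sum: "(\<Sum>x\<in>{x. mconf M k j x \<noteq> 0}. mconf M k j x) = k * M" .
  have fin: "finite {x. mconf M k j x \<noteq> 0}"
    by (rule finite_subset[of _ "{0..int k}"]) (use supp in auto)
  have bd: "\<forall>x. mconf M k j x \<le> M" using assms by (simp add: mconf_def)
  show ?thesis unfolding configs_def mem_Collect_eq using sum fin bd by blast
qed

lemma mconf_potential:
  assumes "j \<le> M" "k \<ge> 2"
  shows "potential M (mconf M k j) = real M ^ 2"
proof -
  let ?m = "mconf M k j"
  let ?g = "\<lambda>x. FF M (real (?m x)) (real (?m (x+1)))"
  have "potential M ?m = (\<Sum>x\<in>{-1..int k}. ?g x)"
    by (rule pot_interval) (auto simp: mconf_def split: if_splits)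
  also have "\<dots> = (\<Sum>x\<in>{-1, 0, int k - 1, int k}. ?g x)"
  proof (rule sum.mono_neutral_right)
    show "finite {-1..int k}" by simp
    show "{-1, 0, int k - 1, int k} \<subseteq> {-1..int k}" using assms by auto
    show "\<forall>i\<in>{-1..int k} - {-1, 0, int k - 1, int k}. ?g i = 0"
    proof
      fix i assume i: "i \<in> {-1..int k} - {-1, 0, int k - 1, int k}"
      then have "?m i = M" "?m (i+1) = M" by (auto simp: mconf_def)
      then show "?g i = 0" by (simp add: FF_def)
    qed
  qed
  also have "\<dots> = ?g (-1) + ?g 0 + ?g (int k - 1) + ?g (int k)"
    using assms by (simp add: sum.insert)
  also have "\<dots> = real M ^ 2"
  proof -
    have k1: "int k - 1 \<noteq> 0" "\<not> int k - 1 < 1" using assms by auto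
    have a: "?m (-1) = 0" "?m 0 = j" "?m (0+1) = M" "?m (int k - 1) = M" "?m (int k - 1 + 1) = M - j"
      "?m (int k) = M - j" "?m (int k + 1) = 0" "?m (-1+1) = j"
      using assms by (auto simp: mconf_def)
    have "real (M - j) = real M - real j" using assms by simp
    then show ?thesis unfolding a by (simp add: FF_def power2_eq_square algebra_simps)
  qed
  finally show ?thesis .
qed

lemma FF_split:
  fixes p q :: real
  shows "FF M p q = real M / 2 * \<bar>q - p\<bar> + min p q * (real M - max p q)"
  unfolding FF_def by (cases "p \<le> q") (auto simp: field_simps min_def max_def)

lemma min_split:
  fixes p q :: real
  shows "min p q = (p + q - \<bar>q - p\<bar>) / 2"
  by (cases "p \<le> q") (auto simp: min_def)

lemma key:
  assumes cfg: "m \<in> configs M (k * M)" and M2: "M \<ge> 2" and k2: "k \<ge> 2"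
  shows "potential M m \<ge> real M ^ 2 \<and>
    (potential M m = real M ^ 2 \<longrightarrow> (\<exists>t j. j \<in> {1..M} \<and> m = translate t (mconf M k j)))"
proof -
  define S where "S = {x. m x \<noteq> 0}"
  have finS: "finite S" and bdd: "\<And>x. m x \<le> M" and massS: "sum m S = k * M"
    using cfg unfolding configs_def S_def by auto
  have Sne: "S \<noteq> {}"
  proof
    assume "S = {}"
    then have "sum m S = 0" by simp
    moreover have "k * M > 0" using M2 k2 by simp
    ultimately show False using massS by simp
  qed
  define L where "L = Min S"
  define R where "R = Max S"
  have LS: "L \<in> S" and RS: "R \<in> S" unfolding L_def R_def using finS Sne by auto
  have out: "\<And>x. m x \<noteq> 0 \<Longrightarrow> L \<le> x \<and> x \<le> R"
    unfolding L_def R_def using finS S_def by auto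
  define h where "h = Max (m ` S)"
  have "h \<in> m ` S" unfolding h_def using finS Sne by auto
  then obtain p where pS: "p \<in> S" and mp: "m p = h" by auto
  have hge: "\<And>x. m x \<le> h"
  proof -
    fix x show "m x \<le> h"
    proof (cases "x \<in> S")
      case True then show ?thesis unfolding h_def using finS by auto
    next
      case False then show ?thesis unfolding S_def by auto
    qed
  qed
  have hM: "h \<le> M" using bdd mp by metis
  have hpos: "h > 0" using pS mp unfolding S_def by auto
  define a where "a = L - 1"
  define b where "b = R"
  have ap: "a < p" and pb: "p \<le> b" using out[of p] pS unfolding S_def a_def b_def by auto
  have supp: "a < x \<and> x \<le> b" if "m x \<noteq> 0" for x using out[OF that] unfolding a_def b_def by auto
  define u where "u = (\<lambda>x. real (m x))"
  define D where "D = (\<lambda>x. u (x+1) - u x)"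
  have ua: "u a = 0" and ub: "u (b+1) = 0" using supp[of a] supp[of "b+1"] unfolding u_def by auto
  have V: "potential M m = (\<Sum>x\<in>{a..b}. FF M (u x) (u (x+1)))"
    unfolding u_def by (rule pot_interval) (use supp in auto)
  have "sum m S = sum m {a..b}"
    unfolding S_def by (rule mass_interval) (metis supp atLeastAtMost_iff less_imp_le, simp)
  then have N: "real k * real M = (\<Sum>x\<in>{a..b}. u x)"
    using massS unfolding u_def by (metis of_nat_mult of_nat_sum)
  have ab1: "{a..b} = {a..<b+1}" by (simp add: atLeastLessThanPlusOne_atLeastAtMost_int)
  have pb1: "{p..b} = {p..<b+1}" by (simp add: atLeastLessThanPlusOne_atLeastAtMost_int)
  have sD1: "(\<Sum>x\<in>{a..<p}. D x) = real h"
    unfolding D_def using tel[of a p u] ap ua mp unfolding u_def by simp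
  have sD2: "(\<Sum>x\<in>{p..b}. D x) = - real h"
    unfolding D_def pb1 using tel[of p "b+1" u] pb ub mp unfolding u_def by simp
  have sD: "(\<Sum>x\<in>{a..b}. D x) = 0"
    unfolding D_def ab1 using tel[of a "b+1" u] ap pb ua ub by simp
  have N2: "(\<Sum>x\<in>{a..b}. u (x+1)) = real k * real M"
    using sD N unfolding D_def by (simp add: sum_subtractf)
  define TV where "TV = (\<Sum>x\<in>{a..b}. \<bar>D x\<bar>)"
  have split: "{a..b} = {a..<p} \<union> {p..b}" using ap pb by auto
  have TVs: "TV = (\<Sum>x\<in>{a..<p}. \<bar>D x\<bar>) + (\<Sum>x\<in>{p..b}. \<bar>D x\<bar>)"
    unfolding TV_def split by (rule sum.union_disjoint) auto
  define A where "A = (\<Sum>x\<in>{a..<p}. \<bar>D x\<bar> - D x)"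
  define B where "B = (\<Sum>x\<in>{p..b}. \<bar>D x\<bar> + D x)"
  have A0: "A \<ge> 0" unfolding A_def by (rule sum_nonneg) auto
  have B0: "B \<ge> 0" unfolding B_def by (rule sum_nonneg) auto
  have TVAB: "TV = A + B + 2 * real h"
    using TVs sD1 sD2 unfolding A_def B_def by (simp add: sum_subtractf sum.distrib)
  define Cp where "Cp = (\<Sum>x\<in>{a..b}. min (u x) (u (x+1)) * (real M - max (u x) (u (x+1))))"
  have VC: "potential M m = real M / 2 * TV + Cp"
    unfolding V Cp_def TV_def FF_split D_def by (simp add: sum.distrib sum_distrib_left)
  define Smin where "Smin = (\<Sum>x\<in>{a..b}. min (u x) (u (x+1)))"
  have Smin_eq: "Smin = real k * real M - TV / 2"
    unfolding Smin_def min_split TV_def D_def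
    using N N2 by (simp add: sum_divide_distrib[symmetric] sum.distrib sum_subtractf)
  have Cpge: "Cp \<ge> (real M - real h) * Smin"
    unfolding Cp_def Smin_def sum_distrib_left
  proof (rule sum_mono)
    fix x assume "x \<in> {a..b}"
    have h1: "real M - real h \<le> real M - max (u x) (u (x+1))" using hge[of x] hge[of "x+1"] unfolding u_def by simp
    have h2: "min (u x) (u (x+1)) \<ge> 0" unfolding u_def by simp
    have "min (u x) (u (x+1)) * (real M - real h) \<le> min (u x) (u (x+1)) * (real M - max (u x) (u (x+1)))"
      by (rule mult_left_mono[OF h1 h2])
    then show "(real M - real h) * min (u x) (u (x+1)) \<le> min (u x) (u (x+1)) * (real M - max (u x) (u (x+1)))"
      by (simp add: mult.commute mult_left_mono)
  qed
  have e1: "(real M - real h) * Smin = (real M - real h) * (real k * real M - TV / 2)"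
    by (simp add: Smin_eq)
  have e2: "real M / 2 * TV + (real M - real h) * (real k * real M - TV / 2)
      = real h / 2 * (A + B) + real M ^ 2 + (real M - real h) * (real k * real M - real M - real h)"
    unfolding TVAB by (simp add: field_simps power2_eq_square)
  have hM': "real h \<le> real M" using hM by simp
  have kM: "real k * real M \<ge> 2 * real M" using k2 by (simp add: mult_right_mono)
  have f1: "real h / 2 * (A + B) \<ge> 0" using A0 B0 by simp
  have f2: "(real M - real h) * (real k * real M - real M - real h) \<ge> 0"
    using hM' kM by (intro mult_nonneg_nonneg) auto
  have lower: "potential M m \<ge> real h / 2 * (A + B) + real M ^ 2 + (real M - real h) * (real k * real M - real M - real h)"
    using VC Cpge e1 e2 by linarith
  have part1: "potential M m \<ge> real M ^ 2" using lower f1 f2 by linarith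
  show ?thesis
  proof (intro conjI impI part1)
    assume eqV: "potential M m = real M ^ 2"
    have f12: "real h / 2 * (A + B) = 0" "(real M - real h) * (real k * real M - real M - real h) = 0"
      using lower f1 f2 eqV by linarith+
    have hMr: "real h = real M"
    proof -
      from f12(2) have "real M - real h = 0 \<or> real k * real M - real M - real h = 0" by simp
      then show ?thesis using hM' kM by linarith
    qed
    then have hMeq: "h = M" by simp
    have "A + B = 0" using f12(1) hpos by simp
    then have A00: "A = 0" and B00: "B = 0" using A0 B0 by linarith+
    have Cp0: "Cp = 0"
    proof -
      have "real M / 2 * TV = real M ^ 2" using TVAB A00 B00 hMr by (simp add: power2_eq_square)
      then show ?thesis using VC eqV by linarith
    qed
    have monoL: "m x \<le> m (x+1)" if "a \<le> x" "x < p" for x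
    proof -
      have "\<forall>x\<in>{a..<p}. \<bar>D x\<bar> - D x = 0"
        using A00 unfolding A_def by (subst (asm) sum_nonneg_eq_0_iff) auto
      then have "\<bar>D x\<bar> - D x = 0" using that by auto
      then have "D x \<ge> 0" by linarith
      then show ?thesis unfolding D_def u_def by simp
    qed
    have monoR: "m (x+1) \<le> m x" if "p \<le> x" "x \<le> b" for x
    proof -
      have "\<forall>x\<in>{p..b}. \<bar>D x\<bar> + D x = 0"
        using B00 unfolding B_def by (subst (asm) sum_nonneg_eq_0_iff) auto
      then have "\<bar>D x\<bar> + D x = 0" using that by auto
      then have "D x \<le> 0" by linarith
      then show ?thesis unfolding D_def u_def by simp
    qed
    have edge: "max (m x) (m (x+1)) = M" if "a \<le> x" "x \<le> b" "0 < m x" "0 < m (x+1)" for x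
    proof -
      have nn: "\<forall>x\<in>{a..b}. 0 \<le> min (u x) (u (x+1)) * (real M - max (u x) (u (x+1)))"
        using bdd unfolding u_def by (auto intro!: mult_nonneg_nonneg)
      have "\<forall>x\<in>{a..b}. min (u x) (u (x+1)) * (real M - max (u x) (u (x+1))) = 0"
        using Cp0 nn unfolding Cp_def by (subst (asm) sum_nonneg_eq_0_iff) auto
      then have z: "min (u x) (u (x+1)) * (real M - max (u x) (u (x+1))) = 0" using that by auto
      have "min (u x) (u (x+1)) > 0" using that unfolding u_def by simp
      with z have "max (u x) (u (x+1)) = real M" by simp
      then show ?thesis unfolding u_def by (simp add: max_def split: if_splits)
    qed
    have mL0: "0 < m L" and mR0: "0 < m R" using LS RS unfolding S_def by auto
    have Lp: "L \<le> p" and pR: "p \<le> R" using out[of p] pS unfolding S_def by auto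
    have up: "y \<le> p \<longrightarrow> m L \<le> m y" if "L \<le> y" for y
      using that
    proof (induction y rule: int_ge_induct)
      case base then show ?case by simp
    next
      case (step i)
      show ?case
      proof
        assume "i + 1 \<le> p"
        then have "m L \<le> m i" using step by simp
        moreover have "m i \<le> m (i+1)" using monoL[of i] step(1) \<open>i + 1 \<le> p\<close> unfolding a_def by simp
        ultimately show "m L \<le> m (i+1)" by simp
      qed
    qed
    have down: "p \<le> y \<longrightarrow> m R \<le> m y" if "y \<le> R" for y
      using that
    proof (induction y rule: int_le_induct)
      case base then show ?case by simp
    next
      case (step i)
      show ?case
      proof
        assume "p \<le> i - 1"
        then have "m R \<le> m i" using step by simp
        moreover have "m (i - 1 + 1) \<le> m (i - 1)" using monoR[of "i - 1"] step(1) \<open>p \<le> i - 1\<close> unfolding b_def by simp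
        ultimately show "m R \<le> m (i - 1)" by simp
      qed
    qed
    have inter: "m x = M" if "L < x" "x < R" for x
    proof (cases "x \<le> p")
      case True
      have "m L \<le> m (x - 1)" using up[of "x - 1"] that True by simp
      then have p1: "0 < m (x - 1)" using mL0 by simp
      have le: "m (x - 1) \<le> m (x - 1 + 1)" using monoL[of "x - 1"] that True unfolding a_def by simp
      then have p2: "0 < m (x - 1 + 1)" using p1 by simp
      have "max (m (x - 1)) (m (x - 1 + 1)) = M"
        using edge[of "x - 1"] p1 p2 that unfolding a_def b_def by simp
      then show ?thesis using le by (simp add: max_def)
    next
      case False
      have "m R \<le> m (x + 1)" using down[of "x + 1"] that False by simp
      then have p2: "0 < m (x + 1)" using mR0 by simp
      have le: "m (x + 1) \<le> m x" using monoR[of x] that False unfolding b_def by simp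
      then have p1: "0 < m x" using p2 by simp
      have "max (m x) (m (x + 1)) = M"
        using edge[of x] p1 p2 that False ap unfolding a_def b_def by simp
      then show ?thesis using le by (simp add: max_def)
    qed
    have LR: "L < R"
    proof (rule ccontr)
      assume "\<not> L < R"
      then have "R = L" using LS RS out[of L] mL0 by (metis less_le linorder_not_le out neq0_conv)
      have "sum m S = sum m {L}"
        unfolding S_def
      proof (rule mass_interval)
        fix x assume "m x \<noteq> 0" then show "x \<in> {L}" using out[of x] \<open>R = L\<close> by auto
      qed simp
      then have "k * M = m L" using massS by simp
      moreover have "m L \<le> M" by (rule bdd)
      moreover have "k * M \<ge> 2 * M" using k2 by simp
      ultimately show False using M2 by simp
    qed
    define n where "n = nat (R - (L + 1))"
    have nR: "R = L + int n + 1" unfolding n_def using LR by simp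
    have "sum m S = sum m {L..R}"
      unfolding S_def by (intro mass_interval) (use out in force, simp)
    also have "{L..R} = insert L (insert R {L<..<R})" using LR by auto
    also have "sum m (insert L (insert R {L<..<R})) = m L + (m R + sum m {L<..<R})"
      using LR by simp
    also have "sum m {L<..<R} = sum (\<lambda>_. M) {L<..<R}"
      by (rule sum.cong) (auto intro: inter)
    also have "\<dots> = n * M" unfolding n_def by simp
    finally have tot: "m L + (m R + n * M) = k * M" using massS by simp
    define j where "j = m L"
    define c where "c = m R"
    have j1: "1 \<le> j" "j \<le> M" using mL0 bdd unfolding j_def by (auto simp: Suc_le_eq)
    have c1: "1 \<le> c" "c \<le> M" using mR0 bdd unfolding c_def by (auto simp: Suc_le_eq)
    have Mpos: "M > 0" using M2 by simp
    have zeroout: "m x = 0" if "x < L \<or> x > R" for x using out[of x] that by force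
    show "\<exists>t j. j \<in> {1..M} \<and> m = translate t (mconf M k j)"
    proof (cases "j = M")
      case True
      have "c + (n + 1) * M = k * M" using tot True unfolding j_def c_def by simp
      then have "(n + 1) * M \<le> k * M" by linarith
      then have kn: "n + 1 \<le> k" using Mpos by (subst (asm) mult_le_cancel2) simp
      have "c = k * M - (n + 1) * M" using \<open>c + (n + 1) * M = k * M\<close> by simp
      then have cc: "c = (k - (n + 1)) * M" by (simp add: diff_mult_distrib)
      have "k - (n + 1) \<noteq> 0" using cc c1 by auto
      moreover have "k - (n + 1) \<le> 1"
      proof (rule ccontr)
        assume "\<not> ?thesis"
        then have "2 * M \<le> (k - (n + 1)) * M" by (intro mult_le_mono1) simp
        then show False using cc c1 Mpos by simp
      qed
      ultimately have kn2: "k = n + 2" using kn by simp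
      have cM: "c = M" using cc kn2 by simp
      have "m = translate L (mconf M k M)"
      proof
        fix x
        show "m x = translate L (mconf M k M) x"
        proof (cases "x < L \<or> x > R")
          case True
          then show ?thesis using zeroout[OF True] nR kn2 unfolding translate_def mconf_def by auto
        next
          case False
          then consider "x = L" | "L < x \<and> x < R" | "x = R" by linarith
          then show ?thesis
          proof cases
            case 1 then show ?thesis using True unfolding j_def translate_def mconf_def by simp
          next
            case 2 then show ?thesis using inter[of x] nR kn2 unfolding translate_def mconf_def by auto
          next
            case 3 then show ?thesis using cM nR kn2 unfolding c_def translate_def mconf_def by auto
          qed
        qed
      qed
      then show ?thesis using j1 True by (intro exI[of _ L] exI[of _ M]) auto
    next
      case False
      then have jM: "j < M" using j1 by simp
      have "(j + c) + n * M = k * M" using tot unfolding j_def c_def by simp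
      then have "n * M \<le> k * M" by linarith
      then have kn: "n \<le> k" using Mpos by (subst (asm) mult_le_cancel2) simp
      have "j + c = k * M - n * M" using \<open>(j + c) + n * M = k * M\<close> by simp
      then have cc: "j + c = (k - n) * M" by (simp add: diff_mult_distrib)
      have "k - n \<noteq> 0" using cc c1 by auto
      moreover have "k - n \<le> 1"
      proof (rule ccontr)
        assume "\<not> ?thesis"
        then have "2 * M \<le> (k - n) * M" by (intro mult_le_mono1) simp
        then show False using cc c1 jM by linarith
      qed
      ultimately have kn2: "k = n + 1" using kn by simp
      have cM: "c = M - j" using cc kn2 by simp
      have "m = translate L (mconf M k j)"
      proof
        fix x
        show "m x = translate L (mconf M k j) x"
        proof (cases "x < L \<or> x > R")
          case True
          then show ?thesis using zeroout[OF True] nR kn2 unfolding translate_def mconf_def by auto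
        next
          case False
          then consider "x = L" | "L < x \<and> x < R" | "x = R" by linarith
          then show ?thesis
          proof cases
            case 1 then show ?thesis unfolding j_def translate_def mconf_def by simp
          next
            case 2 then show ?thesis using inter[of x] nR kn2 unfolding translate_def mconf_def by auto
          next
            case 3 then show ?thesis using cM nR kn2 unfolding c_def translate_def mconf_def by auto
          qed
        qed
      qed
      then show ?thesis using j1 by (intro exI[of _ L] exI[of _ j]) auto
    qed
  qed
qed

theorem mainTheorem6:
  fixes M k :: nat
  assumes "M \<ge> 2" and "k \<ge> 2"
  shows "minimizers M (k * M) = {translate t (mconf M k j) | t j. j \<in> {1..M}}
    \<and> (\<forall>j\<in>{1..M}. potential M (mconf M k j) = real M ^ 2)"
proof (intro conjI ballI)
  show "potential M (mconf M k j) = real M ^ 2" if "j \<in> {1..M}" for j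
    using mconf_potential[of j M k] that assms by simp
  have c1: "mconf M k 1 \<in> configs M (k * M)" using mconf_configs[of 1 M k] assms by simp
  have p1: "potential M (mconf M k 1) = real M ^ 2" using mconf_potential[of 1 M k] assms by simp
  show "minimizers M (k * M) = {translate t (mconf M k j) | t j. j \<in> {1..M}}"
  proof
    show "minimizers M (k * M) \<subseteq> {translate t (mconf M k j) | t j. j \<in> {1..M}}"
    proof
      fix m assume "m \<in> minimizers M (k * M)"
      then have mc: "m \<in> configs M (k * M)" and le: "potential M m \<le> potential M (mconf M k 1)"
        using c1 unfolding minimizers_def by auto
      have "potential M m \<ge> real M ^ 2 \<and>
        (potential M m = real M ^ 2 \<longrightarrow> (\<exists>t j. j \<in> {1..M} \<and> m = translate t (mconf M k j)))"
        by (rule key[OF mc assms])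
      then have "\<exists>t j. j \<in> {1..M} \<and> m = translate t (mconf M k j)" using le p1 by auto
      then show "m \<in> {translate t (mconf M k j) | t j. j \<in> {1..M}}" by blast
    qed
  next
    show "{translate t (mconf M k j) | t j. j \<in> {1..M}} \<subseteq> minimizers M (k * M)"
    proof
      fix m assume "m \<in> {translate t (mconf M k j) | t j. j \<in> {1..M}}"
      then obtain t j where j: "j \<in> {1..M}" and m: "m = translate t (mconf M k j)" by blast
      have mc: "m \<in> configs M (k * M)"
        unfolding m using translate_configs mconf_configs[of j M k] j assms by auto
      have pm: "potential M m = real M ^ 2"
        unfolding m potential_translate using mconf_potential[of j M k] j assms by auto
      have "\<forall>m'\<in>configs M (k * M). potential M m \<le> potential M m'"
        using key[OF _ assms] pm by auto
      then show "m \<in> minimizers M (k * M)" using mc unfolding minimizers_def by auto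
    qed
  qed
qed

end
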